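(* Let $\theta$ be the parameters of an Elman RNN with $L$ layers such that every bias vector $\mathbf{b}^\ell$ ($0\le\ell\le L-1$) has all entries nonzero, and let $\mathcal{X}(\theta)$ be as defined below. Suppose $\theta\in\mathcal{X}(\theta)$ and $\theta'=\mathcal{P}(\theta)\in\mathcal{X}(\theta)$ where $\mathcal{P}=(\mathbf{I},\tilde{\mathbf{P}}^1\mathbf{D}^1,\dots,\tilde{\mathbf{P}}^{L-1}\mathbf{D}^{L-1},\mathbf{I})$ with each $\tilde{\mathbf{P}}^\ell$ a permutation matrix and each $\mathbf{D}^\ell$ a diagonal matrix with strictly positive diagonal entries. Then $\mathbf{D}^\ell=\mathbf{I}_{d_\ell}$ for all $0<\ell<L$.
   Context: Elman RNN: parameters $\theta=(\mathbf{W}_{\mathrm{rec}}^{\ell+1},\mathbf{W}_{\mathrm{ff}}^{\ell},\mathbf{b}^{\ell})_{0\le\ell\le L-1}$ with $\mathbf{W}_{\mathrm{ff}}^{\ell}\in\mathbb{R}^{d_{\ell+1}\times d_\ell}$, $\mathbf{W}_{\mathrm{rec}}^{\ell+1}\in\mathbb{R}^{d_{\ell+1}\times d_{\ell+1}}$, $\mathbf{b}^\ell\in\mathbb{R}^{d_{\ell+1}}$. An element $\mathcal{P}=(\mathbf{P}^0,\dots,\mathbf{P}^L)$ with $\mathbf{P}^0=\mathbf{I}$, $\mathbf{P}^L=\mathbf{I}$ and invertible $\mathbf{P}^\ell$ acts on $\theta$ by replacing, for each $1\le\ell\le L$, $(\mathbf{W}_{\mathrm{rec}}^{\ell},\mathbf{W}_{\mathrm{ff}}^{\ell-1},\mathbf{b}^{\ell-1})$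 with $(\mathbf{P}^\ell\mathbf{W}_{\mathrm{rec}}^{\ell}(\mathbf{P}^\ell)^{-1},\ \mathbf{P}^\ell\mathbf{W}_{\mathrm{ff}}^{\ell-1}(\mathbf{P}^{\ell-1})^{-1},\ \mathbf{P}^\ell\mathbf{b}^{\ell-1})$, giving $\mathcal{P}(\theta)$. $\mathcal{G}_{\mathrm{scaled}}$ is the set of such $\mathcal{P}$ with each $\mathbf{P}^\ell=\tilde{\mathbf{P}}^\ell\mathbf{D}^\ell$ ($1\le\ell\le L-1$), $\tilde{\mathbf{P}}^\ell$ a permutation matrix, $\mathbf{D}^\ell$ diagonal with strictly positive diagonal. Norm: $\|\theta\|_2^2=\|\mathbf{W}_{\mathrm{ff}}^{L-1}\|_F^2+\|\mathbf{b}^{L-1}\|^2+\sum_{0<\ell<L}(\|\mathbf{W}_{\mathrm{rec}}^{\ell}\|_F^2+\|\mathbf{W}_{\mathrm{ff}}^{\ell-1}\|_F^2+\|\mathbf{b}^{\ell-1}\|^2)$. $\mathcal{X}(\theta)$ is the set of $\theta'$ minimizing $\|\theta'\|_2$ subject to $\theta'=\mathcal{P}(\theta)$ for some $\mathcal{P}\in\mathcal{G}_{\mathrm{scaled}}$. *)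

theory Defs
  imports "Jordan_Normal_Form.Matrix" "HOL-Combinatorics.Permutations"
begin

(* Layer dimensions d :: nat \<Rightarrow> nat (d 0, ..., d L).
   Wff l : d(l+1) x d l   (0 \<le> l \<le> L-1)
   Wrec l : d l x d l     (1 \<le> l \<le> L)
   b l : vector of length d(l+1)  (0 \<le> l \<le> L-1)
   Entries at other indices are irrelevant and left untouched by the action. *)
record rnn_params =
  Wrec :: "nat \<Rightarrow> real mat"
  Wff  :: "nat \<Rightarrow> real mat"
  bias :: "nat \<Rightarrow> real vec"

definition rnn_wf :: "nat \<Rightarrow> (nat \<Rightarrow> nat) \<Rightarrow> rnn_params \<Rightarrow> bool" where
  "rnn_wf L d \<theta> \<longleftrightarrow> (\<forall>l<L.
      Wff \<theta> l \<in> carrier_mat (d (Suc l)) (d l) \<and>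
      Wrec \<theta> (Suc l) \<in> carrier_mat (d (Suc l)) (d (Suc l)) \<and>
      bias \<theta> l \<in> carrier_vec (d (Suc l)))"

definition minv :: "nat \<Rightarrow> real mat \<Rightarrow> real mat" where
  "minv n A = (SOME B. B \<in> carrier_mat n n \<and> A * B = 1\<^sub>m n \<and> B * A = 1\<^sub>m n)"

definition perm_matrix :: "nat \<Rightarrow> real mat \<Rightarrow> bool" where
  "perm_matrix n P \<longleftrightarrow> P \<in> carrier_mat n n \<and>
     (\<exists>\<sigma>. \<sigma> permutes {..<n} \<and> (\<forall>i<n. \<forall>j<n. P $$ (i, j) = (if i = \<sigma> j then 1 else 0)))"

definition pos_diag_matrix :: "nat \<Rightarrow> real mat \<Rightarrow> bool" where
  "pos_diag_matrix n D \<longleftrightarrow> D \<in> carrier_mat n n \<and> diagonal_mat D \<and> (\<forall>i<n. D $$ (i, i) > 0)"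

definition rnn_act :: "nat \<Rightarrow> (nat \<Rightarrow> nat) \<Rightarrow> (nat \<Rightarrow> real mat) \<Rightarrow> rnn_params \<Rightarrow> rnn_params" where
  "rnn_act L d P \<theta> =
     \<lparr> Wrec = (\<lambda>l. if 1 \<le> l \<and> l \<le> L then P l * Wrec \<theta> l * minv (d l) (P l) else Wrec \<theta> l),
       Wff = (\<lambda>k. if k < L then P (Suc k) * Wff \<theta> k * minv (d k) (P k) else Wff \<theta> k),
       bias = (\<lambda>k. if k < L then P (Suc k) *\<^sub>v bias \<theta> k else bias \<theta> k) \<rparr>"

definition G_scaled :: "nat \<Rightarrow> (nat \<Rightarrow> nat) \<Rightarrow> (nat \<Rightarrow> real mat) set" where
  "G_scaled L d = {P. P 0 = 1\<^sub>m (d 0) \<and> P L = 1\<^sub>m (d L) \<and>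
     (\<forall>l. 1 \<le> l \<and> l \<le> L - 1 \<longrightarrow>
        (\<exists>Pt D. perm_matrix (d l) Pt \<and> pos_diag_matrix (d l) D \<and> P l = Pt * D))}"

definition frob2 :: "real mat \<Rightarrow> real" where
  "frob2 A = (\<Sum>i<dim_row A. \<Sum>j<dim_col A. (A $$ (i, j))\<^sup>2)"

definition vnorm2 :: "real vec \<Rightarrow> real" where
  "vnorm2 v = (\<Sum>i<dim_vec v. (v $ i)\<^sup>2)"

definition rnn_norm :: "nat \<Rightarrow> rnn_params \<Rightarrow> real" where
  "rnn_norm L \<theta> = sqrt (frob2 (Wff \<theta> (L - 1)) + vnorm2 (bias \<theta> (L - 1)) +
     (\<Sum>l\<in>{1..<L}. frob2 (Wrec \<theta> l) + frob2 (Wff \<theta> (l - 1)) + vnorm2 (bias \<theta> (l - 1))))"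

definition X_min :: "nat \<Rightarrow> (nat \<Rightarrow> nat) \<Rightarrow> rnn_params \<Rightarrow> rnn_params set" where
  "X_min L d \<theta> = {\<theta>'. (\<exists>P\<in>G_scaled L d. \<theta>' = rnn_act L d P \<theta>) \<and>
      (\<forall>P\<in>G_scaled L d. rnn_norm L \<theta>' \<le> rnn_norm L (rnn_act L d P \<theta>))}"

end

theory Submission
  imports Defs
begin

definition gm :: "nat \<Rightarrow> (nat \<Rightarrow> nat) \<Rightarrow> (nat \<Rightarrow> real) \<Rightarrow> real mat" where
  "gm n \<sigma> x = mat n n (\<lambda>(i,j). if i = \<sigma> j then x j else 0)"

definition gi :: "nat \<Rightarrow> (nat \<Rightarrow> nat) \<Rightarrow> (nat \<Rightarrow> real) \<Rightarrow> real mat" where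
  "gi n \<sigma> x = mat n n (\<lambda>(i,j). if j = \<sigma> i then 1 / x i else 0)"

lemma sum_perm_delta:
  fixes n :: nat and f :: "nat \<Rightarrow> 'a::comm_monoid_add"
  assumes "\<sigma> permutes {..<n}" "i < n"
  shows "(\<Sum>j<n. if i = \<sigma> j then f j else 0) = f (inv_into UNIV \<sigma> i)"
proof -
  have "(\<Sum>j<n. if i = \<sigma> j then f j else 0) = (\<Sum>j<n. if j = inv_into UNIV \<sigma> i then f j else 0)"
    proof (rule sum.cong[OF refl])
    fix j
    have e: "(i = \<sigma> j) = (j = inv_into UNIV \<sigma> i)"
      unfolding eq_commute[of j "inv_into UNIV \<sigma> i"] eq_commute[of i "\<sigma> j"]
      using permutes_inv_eq[OF assms(1), of i j] by (rule sym)
    show "(if i = \<sigma> j then f j else 0) = (if j = inv_into UNIV \<sigma> i then f j else 0)"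
      by (simp only: e)
  qed
  also have "\<dots> = f (inv_into UNIV \<sigma> i)"
  proof -
    have m: "inv_into UNIV \<sigma> i \<in> {..<n}"
      using permutes_in_image[OF permutes_inv[OF assms(1)]] assms(2) by simp
    show ?thesis by (rule trans[OF sum.delta[OF finite_lessThan]]) (simp only: m if_True)
  qed
  finally show ?thesis .
qed

lemma inv_lt:
  fixes n :: nat
  assumes "\<sigma> permutes {..<n}" "i < n" shows "inv_into UNIV \<sigma> i < n"
  using permutes_in_image[OF permutes_inv[OF assms(1)]] assms(2) by simp

lemma gm_mult:
  assumes A: "A \<in> carrier_mat n k" and s: "\<sigma> permutes {..<n}"
  shows "gm n \<sigma> x * A = mat n k (\<lambda>(i,j). x (inv_into UNIV \<sigma> i) * A $$ (inv_into UNIV \<sigma> i, j))"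
proof (rule eq_matI)
  fix i j assume i: "i < dim_row (mat n k (\<lambda>(i,j). x (inv_into UNIV \<sigma> i) * A $$ (inv_into UNIV \<sigma> i, j)))"
    and j: "j < dim_col (mat n k (\<lambda>(i,j). x (inv_into UNIV \<sigma> i) * A $$ (inv_into UNIV \<sigma> i, j)))"
  have "(gm n \<sigma> x * A) $$ (i,j) = (\<Sum>l<n. (if i = \<sigma> l then x l * A $$ (l, j) else 0))"
    using A i j unfolding gm_def
    by (auto simp: scalar_prod_def lessThan_atLeast0 intro!: sum.cong)
  also have "\<dots> = x (inv_into UNIV \<sigma> i) * A $$ (inv_into UNIV \<sigma> i, j)"
    using sum_perm_delta[OF s] i by simp
  finally show "(gm n \<sigma> x * A) $$ (i,j) = mat n k (\<lambda>(i,j). x (inv_into UNIV \<sigma> i) * A $$ (inv_into UNIV \<sigma> i, j)) $$ (i,j)"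
    using i j by simp
qed (use A in \<open>auto simp: gm_def\<close>)

lemma mult_gi:
  assumes M: "M \<in> carrier_mat k m" and t: "\<tau> permutes {..<m}"
  shows "M * gi m \<tau> y = mat k m (\<lambda>(i,l). M $$ (i, inv_into UNIV \<tau> l) / y (inv_into UNIV \<tau> l))"
proof (rule eq_matI)
  fix i l assume i: "i < dim_row (mat k m (\<lambda>(i,l). M $$ (i, inv_into UNIV \<tau> l) / y (inv_into UNIV \<tau> l)))"
    and l: "l < dim_col (mat k m (\<lambda>(i,l). M $$ (i, inv_into UNIV \<tau> l) / y (inv_into UNIV \<tau> l)))"
  have "(M * gi m \<tau> y) $$ (i,l) = (\<Sum>j<m. (if l = \<tau> j then M $$ (i, j) / y j else 0))"
    using M i l unfolding gi_def
    by (auto simp: scalar_prod_def lessThan_atLeast0 intro!: sum.cong)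
  also have "\<dots> = M $$ (i, inv_into UNIV \<tau> l) / y (inv_into UNIV \<tau> l)"
    using sum_perm_delta[OF t] l by simp
  finally show "(M * gi m \<tau> y) $$ (i,l) = mat k m (\<lambda>(i,l). M $$ (i, inv_into UNIV \<tau> l) / y (inv_into UNIV \<tau> l)) $$ (i,l)"
    using i l by simp
qed (use M in \<open>auto simp: gi_def\<close>)

lemma gm_carrier[simp]: "gm n \<sigma> x \<in> carrier_mat n n" by (simp add: gm_def)
lemma gi_carrier[simp]: "gi n \<sigma> x \<in> carrier_mat n n" by (simp add: gi_def)

lemma gm_gi:
  assumes s: "\<sigma> permutes {..<n}" and x: "\<forall>i<n. x i > 0"
  shows "gm n \<sigma> x * gi n \<sigma> x = 1\<^sub>m n"
proof -
  have "gm n \<sigma> x * gi n \<sigma> x = mat n n (\<lambda>(i,l). gi n \<sigma> x $$ (inv_into UNIV \<sigma> i, l) * x (inv_into UNIV \<sigma> i))"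
    by (subst gm_mult[OF gi_carrier s]) (auto intro!: eq_matI)
  also have "\<dots> = 1\<^sub>m n"
  proof (rule eq_matI)
    fix i l assume i: "i < dim_row (1\<^sub>m n)" and l: "l < dim_col (1\<^sub>m n)"
    have il: "inv_into UNIV \<sigma> i < n" using inv_lt[OF s] i by simp
    have pi: "\<sigma> (inv_into UNIV \<sigma> i) = i" using permutes_inverses[OF s] by simp
    show "mat n n (\<lambda>(i,l). gi n \<sigma> x $$ (inv_into UNIV \<sigma> i, l) * x (inv_into UNIV \<sigma> i)) $$ (i,l) = 1\<^sub>m n $$ (i,l)"
      using i l il pi x by (auto simp: gi_def)
  qed auto
  finally show ?thesis .
qed

lemma gi_gm:
  assumes s: "\<sigma> permutes {..<n}" and x: "\<forall>i<n. x i > 0"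
  shows "gi n \<sigma> x * gm n \<sigma> x = 1\<^sub>m n"
proof (rule eq_matI)
  fix i l assume i: "i < dim_row (1\<^sub>m n)" and l: "l < dim_col (1\<^sub>m n)"
  have "(gi n \<sigma> x * gm n \<sigma> x) $$ (i,l) = (\<Sum>j<n. (if j = \<sigma> i then 1 / x i else 0) * (if j = \<sigma> l then x l else 0))"
    using i l unfolding gi_def gm_def
    by (simp add: scalar_prod_def atLeast0LessThan)
  also have "\<dots> = (\<Sum>j<n. if j = \<sigma> i then (1 / x i) * (if j = \<sigma> l then x l else 0) else 0)"
    by (rule sum.cong) auto
  also have "\<dots> = (1 / x i) * (if \<sigma> i = \<sigma> l then x l else 0)"
    using permutes_in_image[OF s, of i] i by (subst sum.delta) auto
  also have "\<dots> = 1\<^sub>m n $$ (i,l)"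
    using i l x permutes_inj[OF s] by (auto simp: inj_eq)
  finally show "(gi n \<sigma> x * gm n \<sigma> x) $$ (i,l) = 1\<^sub>m n $$ (i,l)" .
qed (auto simp: gi_def gm_def)

lemma minv_gm:
  assumes s: "\<sigma> permutes {..<n}" and x: "\<forall>i<n. x i > 0"
  shows "minv n (gm n \<sigma> x) = gi n \<sigma> x"
proof -
  let ?A = "gm n \<sigma> x"
  have ex: "\<exists>B. B \<in> carrier_mat n n \<and> ?A * B = 1\<^sub>m n \<and> B * ?A = 1\<^sub>m n"
    using gm_gi[OF s x] gi_gm[OF s x] gi_carrier by blast
  define B where "B = minv n ?A"
  have B: "B \<in> carrier_mat n n" "?A * B = 1\<^sub>m n" "B * ?A = 1\<^sub>m n"
    using someI_ex[OF ex] unfolding B_def minv_def by blast+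
  have "B = B * (?A * gi n \<sigma> x)" using gm_gi[OF s x] B by simp
  also have "\<dots> = (B * ?A) * gi n \<sigma> x" by (simp only: assoc_mult_mat[OF B(1) gm_carrier gi_carrier])
  also have "\<dots> = gi n \<sigma> x" using B left_mult_one_mat[OF gi_carrier] by simp
  finally show ?thesis unfolding B_def .
qed

definition MF :: "(nat \<Rightarrow> real) \<Rightarrow> (nat \<Rightarrow> real) \<Rightarrow> real mat \<Rightarrow> nat \<Rightarrow> nat \<Rightarrow> real" where
  "MF x y A n m = (\<Sum>i<n. \<Sum>j<m. (x i * A $$ (i,j) / y j)\<^sup>2)"

definition VB :: "(nat \<Rightarrow> real) \<Rightarrow> real vec \<Rightarrow> nat \<Rightarrow> real" where
  "VB x b n = (\<Sum>i<n. (x i * b $ i)\<^sup>2)"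

lemma reindex_perm:
  assumes s: "\<sigma> permutes {..<n}"
  shows "(\<Sum>i<n. g (inv_into UNIV \<sigma> i)) = (\<Sum>i<n. (g i :: real))"
  using sum.reindex_bij_betw[OF permutes_imp_bij[OF permutes_inv[OF s]], of g] by simp

lemma frob_act:
  assumes A: "A \<in> carrier_mat n m" and s: "\<sigma> permutes {..<n}" and t: "\<tau> permutes {..<m}"
  shows "frob2 (gm n \<sigma> x * A * gi m \<tau> y) = MF x y A n m"
proof -
  let ?M = "mat n m (\<lambda>(i,j). x (inv_into UNIV \<sigma> i) * A $$ (inv_into UNIV \<sigma> i, j))"
  have M: "?M \<in> carrier_mat n m" by simp
  have eq: "gm n \<sigma> x * A * gi m \<tau> y = mat n m (\<lambda>(i,l). ?M $$ (i, inv_into UNIV \<tau> l) / y (inv_into UNIV \<tau> l))"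
    unfolding gm_mult[OF A s] mult_gi[OF M t] ..
  have "frob2 (gm n \<sigma> x * A * gi m \<tau> y) = (\<Sum>i<n. \<Sum>l<m. (x (inv_into UNIV \<sigma> i) * A $$ (inv_into UNIV \<sigma> i, inv_into UNIV \<tau> l) / y (inv_into UNIV \<tau> l))\<^sup>2)"
    unfolding eq frob2_def using inv_lt[OF t] by (auto intro!: sum.cong)
  also have "\<dots> = (\<Sum>i<n. \<Sum>l<m. (x (inv_into UNIV \<sigma> i) * A $$ (inv_into UNIV \<sigma> i, l) / y l)\<^sup>2)"
    apply (rule sum.cong[OF refl])
    subgoal for i using reindex_perm[OF t, of "\<lambda>l. (x (inv_into UNIV \<sigma> i) * A $$ (inv_into UNIV \<sigma> i, l) / y l)\<^sup>2"] by simp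
    done
  also have "\<dots> = MF x y A n m"
    unfolding MF_def by (rule reindex_perm[OF s, where g = "\<lambda>i. \<Sum>l<m. (x i * A $$ (i, l) / y l)\<^sup>2"])
  finally show ?thesis .
qed

lemma vn_act:
  assumes b: "b \<in> carrier_vec n" and s: "\<sigma> permutes {..<n}"
  shows "vnorm2 (gm n \<sigma> x *\<^sub>v b) = VB x b n"
proof -
  have e: "(gm n \<sigma> x *\<^sub>v b) $ i = x (inv_into UNIV \<sigma> i) * b $ (inv_into UNIV \<sigma> i)" if i: "i < n" for i
  proof -
    have "(gm n \<sigma> x *\<^sub>v b) $ i = (\<Sum>j<n. if i = \<sigma> j then x j * b $ j else 0)"
      using b i unfolding gm_def
      by (auto simp: scalar_prod_def lessThan_atLeast0 intro!: sum.cong)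
    then show ?thesis using sum_perm_delta[OF s i] by simp
  qed
  have "vnorm2 (gm n \<sigma> x *\<^sub>v b) = (\<Sum>i<n. (x (inv_into UNIV \<sigma> i) * b $ (inv_into UNIV \<sigma> i))\<^sup>2)"
    unfolding vnorm2_def using e by (auto simp: gm_def intro!: sum.cong)
  also have "\<dots> = VB x b n" unfolding VB_def
    by (rule reindex_perm[OF s, where g = "\<lambda>i. (x i * b $ i)\<^sup>2"])
  finally show ?thesis .
qed

lemma PtD:
  assumes P: "perm_matrix n Pt" and D: "pos_diag_matrix n D"
  shows "\<exists>\<sigma>. \<sigma> permutes {..<n} \<and> Pt * D = gm n \<sigma> (\<lambda>i. D $$ (i,i))"
proof -
  obtain \<sigma> where s: "\<sigma> permutes {..<n}" and Pe: "\<forall>i<n. \<forall>j<n. Pt $$ (i, j) = (if i = \<sigma> j then 1 else 0)"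
    and Pc: "Pt \<in> carrier_mat n n"
    using P unfolding perm_matrix_def by blast
  have Dc: "D \<in> carrier_mat n n" and Dd: "diagonal_mat D" using D unfolding pos_diag_matrix_def by auto
  have De: "D $$ (k, j) = (if k = j then D $$ (j,j) else 0)" if "k < n" "j < n" for k j
    using Dd Dc that unfolding diagonal_mat_def by auto
  have "Pt * D = gm n \<sigma> (\<lambda>i. D $$ (i,i))"
  proof (rule eq_matI)
    fix i j assume i: "i < dim_row (gm n \<sigma> (\<lambda>i. D $$ (i,i)))" and j: "j < dim_col (gm n \<sigma> (\<lambda>i. D $$ (i,i)))"
    have i': "i < n" and j': "j < n" using i j by (auto simp: gm_def)
    have "(Pt * D) $$ (i,j) = (\<Sum>k<n. Pt $$ (i,k) * D $$ (k,j))"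
      using Pc Dc i' j' by (simp add: scalar_prod_def atLeast0LessThan)
    also have "\<dots> = (\<Sum>k<n. if k = j then (if i = \<sigma> k then 1 else 0) * D $$ (j,j) else 0)"
    proof (rule sum.cong[OF refl])
      fix k assume "k \<in> {..<n}"
      then have k: "k < n" by simp
      show "Pt $$ (i,k) * D $$ (k,j) = (if k = j then (if i = \<sigma> k then 1 else 0) * D $$ (j,j) else 0)"
        using Pe[rule_format, OF i' k] De[OF k j'] by simp
    qed
    also have "\<dots> = gm n \<sigma> (\<lambda>i. D $$ (i,i)) $$ (i,j)"
      using i' j' by (subst sum.delta) (auto simp: gm_def)
    finally show "(Pt * D) $$ (i,j) = gm n \<sigma> (\<lambda>i. D $$ (i,i)) $$ (i,j)" .
  qed (use Pc Dc in \<open>simp_all add: gm_def\<close>)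
  with s show ?thesis by blast
qed

lemma one_gm: "1\<^sub>m n = gm n id (\<lambda>_. 1)"
  by (rule eq_matI) (auto simp: gm_def)


definition E :: "nat \<Rightarrow> (nat \<Rightarrow> nat) \<Rightarrow> rnn_params \<Rightarrow> (nat \<Rightarrow> nat \<Rightarrow> real) \<Rightarrow> real" where
  "E L d \<theta> \<delta> = MF (\<delta> L) (\<delta> (L-1)) (Wff \<theta> (L-1)) (d L) (d (L-1)) + VB (\<delta> L) (bias \<theta> (L-1)) (d L) +
     (\<Sum>l\<in>{1..<L}. MF (\<delta> l) (\<delta> l) (Wrec \<theta> l) (d l) (d l) + MF (\<delta> l) (\<delta> (l-1)) (Wff \<theta> (l-1)) (d l) (d (l-1))
        + VB (\<delta> l) (bias \<theta> (l-1)) (d l))"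

definition goodQ :: "nat \<Rightarrow> (nat \<Rightarrow> nat) \<Rightarrow> (nat \<Rightarrow> real mat) \<Rightarrow> (nat \<Rightarrow> nat \<Rightarrow> real) \<Rightarrow> bool" where
  "goodQ L d Q \<delta> \<longleftrightarrow> (\<forall>l\<le>L. \<exists>\<sigma>. \<sigma> permutes {..<d l} \<and> Q l = gm (d l) \<sigma> (\<delta> l) \<and> (\<forall>i<d l. \<delta> l i > 0))"

lemma frob2_nonneg: "frob2 A \<ge> 0" unfolding frob2_def by (intro sum_nonneg) auto
lemma vnorm2_nonneg: "vnorm2 v \<ge> 0" unfolding vnorm2_def by (intro sum_nonneg) auto

lemma act_Wff:
  assumes wf: "rnn_wf L d \<theta>" and Q: "goodQ L d Q \<delta>" and k: "k < L"
  shows "frob2 (Wff (rnn_act L d Q \<theta>) k) = MF (\<delta> (Suc k)) (\<delta> k) (Wff \<theta> k) (d (Suc k)) (d k)"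
proof -
  obtain s1 where s1: "s1 permutes {..<d (Suc k)}" "Q (Suc k) = gm (d (Suc k)) s1 (\<delta> (Suc k))"
    using Q k unfolding goodQ_def by (meson Suc_leI)
  obtain s0 where s0: "s0 permutes {..<d k}" "Q k = gm (d k) s0 (\<delta> k)" "\<forall>i<d k. \<delta> k i > 0"
    using Q k unfolding goodQ_def by (meson less_imp_le)
  have A: "Wff \<theta> k \<in> carrier_mat (d (Suc k)) (d k)" using wf k unfolding rnn_wf_def by blast
  show ?thesis using k unfolding rnn_act_def
    by (simp add: s1 s0 minv_gm frob_act[OF A s1(1) s0(1)])
qed

lemma act_Wrec:
  assumes wf: "rnn_wf L d \<theta>" and Q: "goodQ L d Q \<delta>" and l: "1 \<le> l" "l \<le> L"
  shows "frob2 (Wrec (rnn_act L d Q \<theta>) l) = MF (\<delta> l) (\<delta> l) (Wrec \<theta> l) (d l) (d l)"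
proof -
  obtain s0 where s0: "s0 permutes {..<d l}" "Q l = gm (d l) s0 (\<delta> l)" "\<forall>i<d l. \<delta> l i > 0"
    using Q l unfolding goodQ_def by meson
  have "Wrec \<theta> (Suc (l-1)) \<in> carrier_mat (d (Suc (l-1))) (d (Suc (l-1)))"
    using wf l unfolding rnn_wf_def by (metis Suc_le_eq Suc_pred' le_less_trans less_one not_le)
  then have A: "Wrec \<theta> l \<in> carrier_mat (d l) (d l)" using l by simp
  show ?thesis using l unfolding rnn_act_def
    by (simp add: s0 minv_gm frob_act[OF A s0(1) s0(1)])
qed

lemma act_bias:
  assumes wf: "rnn_wf L d \<theta>" and Q: "goodQ L d Q \<delta>" and k: "k < L"
  shows "vnorm2 (bias (rnn_act L d Q \<theta>) k) = VB (\<delta> (Suc k)) (bias \<theta> k) (d (Suc k))"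
proof -
  obtain s1 where s1: "s1 permutes {..<d (Suc k)}" "Q (Suc k) = gm (d (Suc k)) s1 (\<delta> (Suc k))"
    using Q k unfolding goodQ_def by (meson Suc_leI)
  have b: "bias \<theta> k \<in> carrier_vec (d (Suc k))" using wf k unfolding rnn_wf_def by blast
  show ?thesis using k unfolding rnn_act_def
    by (simp add: s1 vn_act[OF b s1(1)])
qed

lemma norm_act:
  assumes L: "1 \<le> L" and wf: "rnn_wf L d \<theta>" and Q: "goodQ L d Q \<delta>"
  shows "(rnn_norm L (rnn_act L d Q \<theta>))\<^sup>2 = E L d \<theta> \<delta>"
proof -
  let ?t = "rnn_act L d Q \<theta>"
  have LL: "Suc (L-1) = L" using L by simp
  have h1: "frob2 (Wff ?t (L-1)) = MF (\<delta> L) (\<delta> (L-1)) (Wff \<theta> (L-1)) (d L) (d (L-1))"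
    using act_Wff[OF wf Q, of "L-1"] L LL by simp
  have h2: "vnorm2 (bias ?t (L-1)) = VB (\<delta> L) (bias \<theta> (L-1)) (d L)"
    using act_bias[OF wf Q, of "L-1"] L LL by simp
  have h3: "(\<Sum>l\<in>{1..<L}. frob2 (Wrec ?t l) + frob2 (Wff ?t (l - 1)) + vnorm2 (bias ?t (l - 1)))
     = (\<Sum>l\<in>{1..<L}. MF (\<delta> l) (\<delta> l) (Wrec \<theta> l) (d l) (d l) + MF (\<delta> l) (\<delta> (l-1)) (Wff \<theta> (l-1)) (d l) (d (l-1))
        + VB (\<delta> l) (bias \<theta> (l-1)) (d l))"
  proof (rule sum.cong[OF refl])
    fix l assume l: "l \<in> {1..<L}"
    have Sl: "Suc (l-1) = l" using l by auto
    show "frob2 (Wrec ?t l) + frob2 (Wff ?t (l - 1)) + vnorm2 (bias ?t (l - 1)) =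
       MF (\<delta> l) (\<delta> l) (Wrec \<theta> l) (d l) (d l) + MF (\<delta> l) (\<delta> (l-1)) (Wff \<theta> (l-1)) (d l) (d (l-1))
        + VB (\<delta> l) (bias \<theta> (l-1)) (d l)"
      using act_Wrec[OF wf Q, of l] act_Wff[OF wf Q, of "l-1"] act_bias[OF wf Q, of "l-1"] l Sl by simp
  qed
  have nn: "0 \<le> frob2 (Wff ?t (L - 1)) + vnorm2 (bias ?t (L - 1)) +
     (\<Sum>l\<in>{1..<L}. frob2 (Wrec ?t l) + frob2 (Wff ?t (l - 1)) + vnorm2 (bias ?t (l - 1)))"
    by (intro add_nonneg_nonneg sum_nonneg frob2_nonneg vnorm2_nonneg)
  show ?thesis unfolding rnn_norm_def h1 h2 h3 E_def using nn unfolding h1 h2 h3 by (rule real_sqrt_pow2)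
qed


lemma frob2_MF1: "A \<in> carrier_mat n m \<Longrightarrow> frob2 A = MF (\<lambda>_. 1) (\<lambda>_. 1) A n m"
  unfolding frob2_def MF_def by auto

lemma vnorm2_VB1: "b \<in> carrier_vec n \<Longrightarrow> vnorm2 b = VB (\<lambda>_. 1) b n"
  unfolding vnorm2_def VB_def by auto

lemma norm_base:
  assumes L: "1 \<le> L" and wf: "rnn_wf L d \<theta>"
  shows "(rnn_norm L \<theta>)\<^sup>2 = E L d \<theta> (\<lambda>_ _. 1)"
proof -
  have LL: "Suc (L-1) = L" using L by simp
  have W: "Wff \<theta> k \<in> carrier_mat (d (Suc k)) (d k)" "bias \<theta> k \<in> carrier_vec (d (Suc k))"
    "Wrec \<theta> (Suc k) \<in> carrier_mat (d (Suc k)) (d (Suc k))" if "k < L" for k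
    using wf that unfolding rnn_wf_def by blast+
  have h1: "frob2 (Wff \<theta> (L-1)) = MF (\<lambda>_. 1) (\<lambda>_. 1) (Wff \<theta> (L-1)) (d L) (d (L-1))"
    using frob2_MF1 W(1)[of "L-1"] L LL by simp
  have h2: "vnorm2 (bias \<theta> (L-1)) = VB (\<lambda>_. 1) (bias \<theta> (L-1)) (d L)"
    using vnorm2_VB1 W(2)[of "L-1"] L LL by simp
  have h3: "(\<Sum>l\<in>{1..<L}. frob2 (Wrec \<theta> l) + frob2 (Wff \<theta> (l - 1)) + vnorm2 (bias \<theta> (l - 1)))
     = (\<Sum>l\<in>{1..<L}. MF (\<lambda>_. 1) (\<lambda>_. 1) (Wrec \<theta> l) (d l) (d l) + MF (\<lambda>_. 1) (\<lambda>_. 1) (Wff \<theta> (l-1)) (d l) (d (l-1))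
        + VB (\<lambda>_. 1) (bias \<theta> (l-1)) (d l))"
  proof (rule sum.cong[OF refl])
    fix l assume l: "l \<in> {1..<L}"
    have Sl: "Suc (l-1) = l" using l by auto
    have a: "l - 1 < L" using l by auto
    show "frob2 (Wrec \<theta> l) + frob2 (Wff \<theta> (l - 1)) + vnorm2 (bias \<theta> (l - 1)) =
       MF (\<lambda>_. 1) (\<lambda>_. 1) (Wrec \<theta> l) (d l) (d l) + MF (\<lambda>_. 1) (\<lambda>_. 1) (Wff \<theta> (l-1)) (d l) (d (l-1))
        + VB (\<lambda>_. 1) (bias \<theta> (l-1)) (d l)"
      using frob2_MF1[OF W(3)[OF a]] frob2_MF1[OF W(1)[OF a]] vnorm2_VB1[OF W(2)[OF a]] Sl by simp
  qed
  have nn: "0 \<le> frob2 (Wff \<theta> (L - 1)) + vnorm2 (bias \<theta> (L - 1)) +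
     (\<Sum>l\<in>{1..<L}. frob2 (Wrec \<theta> l) + frob2 (Wff \<theta> (l - 1)) + vnorm2 (bias \<theta> (l - 1)))"
    by (intro add_nonneg_nonneg sum_nonneg frob2_nonneg vnorm2_nonneg)
  show ?thesis unfolding rnn_norm_def h1 h2 h3 E_def using nn unfolding h1 h2 h3 by (rule real_sqrt_pow2)
qed

lemma term_ineq:
  fixes x y a :: real assumes "x > 0" "y > 0"
  shows "2 * (sqrt x * a / sqrt y)\<^sup>2 \<le> (1 * a / 1)\<^sup>2 + (x * a / y)\<^sup>2"
proof -
  define t where "t = x / y"
  have e1: "(sqrt x * a / sqrt y)\<^sup>2 = t * a\<^sup>2" using assms
    by (simp add: t_def power_divide power_mult_distrib)
  have e2: "(x * a / y)\<^sup>2 = t\<^sup>2 * a\<^sup>2" by (simp add: t_def power_divide power_mult_distrib)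
  have "0 \<le> a\<^sup>2 * (t - 1)\<^sup>2" by simp
  then show ?thesis unfolding e1 e2 by (simp add: power2_eq_square algebra_simps)
qed

lemma MF_ineq:
  assumes "\<forall>i<n. x i > 0" "\<forall>j<m. y j > 0"
  shows "2 * MF (\<lambda>i. sqrt (x i)) (\<lambda>j. sqrt (y j)) A n m \<le> MF (\<lambda>_. 1) (\<lambda>_. 1) A n m + MF x y A n m"
  unfolding MF_def sum_distrib_left sum.distrib[symmetric]
  by (intro sum_mono) (use assms term_ineq in auto)

lemma VB_eq:
  assumes "\<forall>i<n. x i \<ge> 0"
  shows "2 * VB (\<lambda>i. sqrt (x i)) b n + (\<Sum>i<n. (x i - 1)\<^sup>2 * (b $ i)\<^sup>2) = VB (\<lambda>_. 1) b n + VB x b n"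
  unfolding VB_def sum_distrib_left sum.distrib[symmetric]
  by (intro sum.cong refl) (use assms in \<open>auto simp: power2_eq_square algebra_simps\<close>)

lemma VB_ineq:
  assumes "\<forall>i<n. x i \<ge> 0"
  shows "2 * VB (\<lambda>i. sqrt (x i)) b n \<le> VB (\<lambda>_. 1) b n + VB x b n"
proof -
  have "0 \<le> (\<Sum>i<n. (x i - 1)\<^sup>2 * (b $ i)\<^sup>2)" by (intro sum_nonneg) auto
  then show ?thesis using VB_eq[OF assms, of b] by linarith
qed

lemma E_ineq:
  assumes L: "1 \<le> L" and pos: "\<forall>l\<le>L. \<forall>i<d l. \<delta> l i > 0"
  shows "2 * E L d \<theta> (\<lambda>l i. sqrt (\<delta> l i)) + (\<Sum>l\<in>{1..<L}. \<Sum>i<d l. (\<delta> l i - 1)\<^sup>2 * (bias \<theta> (l-1) $ i)\<^sup>2)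
         \<le> E L d \<theta> (\<lambda>_ _. 1) + E L d \<theta> \<delta>"
proof -
  have p1: "\<forall>i<d L. \<delta> L i > 0" "\<forall>i<d (L-1). \<delta> (L-1) i > 0" using pos by auto
  have a1: "2 * MF (\<lambda>i. sqrt (\<delta> L i)) (\<lambda>j. sqrt (\<delta> (L-1) j)) (Wff \<theta> (L-1)) (d L) (d (L-1))
     \<le> MF (\<lambda>_. 1) (\<lambda>_. 1) (Wff \<theta> (L-1)) (d L) (d (L-1)) + MF (\<delta> L) (\<delta> (L-1)) (Wff \<theta> (L-1)) (d L) (d (L-1))"
    using MF_ineq[OF p1] .
  have a2: "2 * VB (\<lambda>i. sqrt (\<delta> L i)) (bias \<theta> (L-1)) (d L) \<le> VB (\<lambda>_. 1) (bias \<theta> (L-1)) (d L) + VB (\<delta> L) (bias \<theta> (L-1)) (d L)"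
    using VB_ineq p1(1) by (simp add: less_imp_le)
  have a3: "(\<Sum>l\<in>{1..<L}. 2 * (MF (\<lambda>i. sqrt (\<delta> l i)) (\<lambda>i. sqrt (\<delta> l i)) (Wrec \<theta> l) (d l) (d l)
        + MF (\<lambda>i. sqrt (\<delta> l i)) (\<lambda>i. sqrt (\<delta> (l-1) i)) (Wff \<theta> (l-1)) (d l) (d (l-1))
        + VB (\<lambda>i. sqrt (\<delta> l i)) (bias \<theta> (l-1)) (d l)) + (\<Sum>i<d l. (\<delta> l i - 1)\<^sup>2 * (bias \<theta> (l-1) $ i)\<^sup>2))
     \<le> (\<Sum>l\<in>{1..<L}. (MF (\<lambda>_. 1) (\<lambda>_. 1) (Wrec \<theta> l) (d l) (d l) + MF (\<lambda>_. 1) (\<lambda>_. 1) (Wff \<theta> (l-1)) (d l) (d (l-1))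
        + VB (\<lambda>_. 1) (bias \<theta> (l-1)) (d l)) + (MF (\<delta> l) (\<delta> l) (Wrec \<theta> l) (d l) (d l) + MF (\<delta> l) (\<delta> (l-1)) (Wff \<theta> (l-1)) (d l) (d (l-1))
        + VB (\<delta> l) (bias \<theta> (l-1)) (d l)))"
  proof (rule sum_mono)
    fix l assume l: "l \<in> {1..<L}"
    have q1: "\<forall>i<d l. \<delta> l i > 0" "\<forall>i<d (l-1). \<delta> (l-1) i > 0" using pos l by auto
    have q2: "\<forall>i<d l. \<delta> l i \<ge> 0" using q1 by (simp add: less_imp_le)
    show "2 * (MF (\<lambda>i. sqrt (\<delta> l i)) (\<lambda>i. sqrt (\<delta> l i)) (Wrec \<theta> l) (d l) (d l)
        + MF (\<lambda>i. sqrt (\<delta> l i)) (\<lambda>i. sqrt (\<delta> (l-1) i)) (Wff \<theta> (l-1)) (d l) (d (l-1))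
        + VB (\<lambda>i. sqrt (\<delta> l i)) (bias \<theta> (l-1)) (d l)) + (\<Sum>i<d l. (\<delta> l i - 1)\<^sup>2 * (bias \<theta> (l-1) $ i)\<^sup>2)
     \<le> (MF (\<lambda>_. 1) (\<lambda>_. 1) (Wrec \<theta> l) (d l) (d l) + MF (\<lambda>_. 1) (\<lambda>_. 1) (Wff \<theta> (l-1)) (d l) (d (l-1))
        + VB (\<lambda>_. 1) (bias \<theta> (l-1)) (d l)) + (MF (\<delta> l) (\<delta> l) (Wrec \<theta> l) (d l) (d l) + MF (\<delta> l) (\<delta> (l-1)) (Wff \<theta> (l-1)) (d l) (d (l-1))
        + VB (\<delta> l) (bias \<theta> (l-1)) (d l))"
      using MF_ineq[OF q1(1) q1(1), of "Wrec \<theta> l"] MF_ineq[OF q1(1) q1(2), of "Wff \<theta> (l-1)"]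
        VB_eq[OF q2, of "bias \<theta> (l-1)"] unfolding distrib_left by linarith
  qed
  show ?thesis using a1 a2 a3 unfolding E_def distrib_left sum.distrib sum_distrib_left by linarith
qed


lemma gm_cong: "(\<And>i. i < n \<Longrightarrow> x i = y i) \<Longrightarrow> gm n \<sigma> x = gm n \<sigma> y"
  unfolding gm_def by (rule eq_matI) auto

lemma perm_one: "perm_matrix n (1\<^sub>m n)"
  unfolding perm_matrix_def by (intro conjI exI[of _ id]) (auto simp: permutes_id)

lemma posdiag_one: "pos_diag_matrix n (1\<^sub>m n)"
  unfolding pos_diag_matrix_def diagonal_mat_def by auto

lemma goodQ_one: "goodQ L d (\<lambda>l. 1\<^sub>m (d l)) (\<lambda>_ _. 1)"
  unfolding goodQ_def using one_gm permutes_id by fastforce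

lemma goodQ_PD:
  assumes "\<forall>l. 0 < l \<and> l < L \<longrightarrow> perm_matrix (d l) (Pt l) \<and> pos_diag_matrix (d l) (D l)"
  shows "goodQ L d (\<lambda>l. if 0 < l \<and> l < L then Pt l * D l else 1\<^sub>m (d l))
           (\<lambda>l i. if 0 < l \<and> l < L then D l $$ (i,i) else 1)"
  unfolding goodQ_def
proof (intro allI impI)
  fix l assume "l \<le> L"
  show "\<exists>\<sigma>. \<sigma> permutes {..<d l} \<and>
          (if 0 < l \<and> l < L then Pt l * D l else 1\<^sub>m (d l)) = gm (d l) \<sigma> (\<lambda>i. if 0 < l \<and> l < L then D l $$ (i,i) else 1) \<and>
          (\<forall>i<d l. 0 < (if 0 < l \<and> l < L then D l $$ (i,i) else 1))"
  proof (cases "0 < l \<and> l < L")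
    case True
    then obtain \<sigma> where "\<sigma> permutes {..<d l}" "Pt l * D l = gm (d l) \<sigma> (\<lambda>i. D l $$ (i,i))"
      using PtD assms by blast
    moreover have "\<forall>i<d l. 0 < D l $$ (i,i)" using assms True unfolding pos_diag_matrix_def by blast
    ultimately show ?thesis using True by auto
  next
    case False
    then show ?thesis using one_gm permutes_id by fastforce
  qed
qed

theorem mainTheorem5:
  fixes L :: nat and d :: "nat \<Rightarrow> nat" and \<theta> :: rnn_params
    and Pt D :: "nat \<Rightarrow> real mat"
  assumes "1 \<le> L"
    and "rnn_wf L d \<theta>"
    and "\<forall>l<L. \<forall>i<d (Suc l). bias \<theta> l $ i \<noteq> 0"
    and "\<forall>l. 0 < l \<and> l < L \<longrightarrow> perm_matrix (d l) (Pt l) \<and> pos_diag_matrix (d l) (D l)"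
    and "\<theta> \<in> X_min L d \<theta>"
    and "rnn_act L d (\<lambda>l. if 0 < l \<and> l < L then Pt l * D l else 1\<^sub>m (d l)) \<theta> \<in> X_min L d \<theta>"
  shows "\<forall>l. 0 < l \<and> l < L \<longrightarrow> D l = 1\<^sub>m (d l)"
proof -
  note L = assms(1) and wf = assms(2) and bnz = assms(3) and PD = assms(4)
  define \<delta>1 where "\<delta>1 = (\<lambda>l i. if 0 < l \<and> l < L then D l $$ (i,i) else (1::real))"
  define Q1 where "Q1 = (\<lambda>l. if 0 < l \<and> l < L then Pt l * D l else 1\<^sub>m (d l))"
  define S where "S = (\<lambda>l. mat (d l) (d l) (\<lambda>(i,j). if i = j then sqrt (D l $$ (i,i)) else 0))"
  define Q2 where "Q2 = (\<lambda>l. if 0 < l \<and> l < L then Pt l * S l else 1\<^sub>m (d l))"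
  define Q0 where "Q0 = (\<lambda>l. 1\<^sub>m (d l) :: real mat)"
  have Dpos: "D l $$ (i,i) > 0" if "0 < l" "l < L" "i < d l" for l i
    using PD that unfolding pos_diag_matrix_def by blast
  have Spd: "pos_diag_matrix (d l) (S l)" if "0 < l" "l < L" for l
    unfolding pos_diag_matrix_def diagonal_mat_def S_def using Dpos[OF that] by auto
  have g1: "goodQ L d Q1 \<delta>1" unfolding Q1_def \<delta>1_def by (rule goodQ_PD[OF PD])
  have g0: "goodQ L d Q0 (\<lambda>_ _. 1)" unfolding Q0_def by (rule goodQ_one)
  have g2: "goodQ L d Q2 (\<lambda>l i. sqrt (\<delta>1 l i))"
    unfolding goodQ_def
  proof (intro allI impI)
    fix l assume "l \<le> L"
    show "\<exists>\<sigma>. \<sigma> permutes {..<d l} \<and> Q2 l = gm (d l) \<sigma> (\<lambda>i. sqrt (\<delta>1 l i)) \<and> (\<forall>i<d l. 0 < sqrt (\<delta>1 l i))"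
    proof (cases "0 < l \<and> l < L")
      case True
      then obtain \<sigma> where s: "\<sigma> permutes {..<d l}" "Pt l * S l = gm (d l) \<sigma> (\<lambda>i. S l $$ (i,i))"
        using PtD PD Spd by blast
      have "gm (d l) \<sigma> (\<lambda>i. S l $$ (i,i)) = gm (d l) \<sigma> (\<lambda>i. sqrt (\<delta>1 l i))"
        by (rule gm_cong) (use True in \<open>simp add: S_def \<delta>1_def\<close>)
      then show ?thesis using s True Dpos unfolding Q2_def \<delta>1_def by auto
    next
      case False
      then show ?thesis using one_gm permutes_id unfolding Q2_def \<delta>1_def by fastforce
    qed
  qed
  have G0: "Q0 \<in> G_scaled L d" unfolding G_scaled_def Q0_def
    using perm_one posdiag_one by (auto intro!: exI[of _ "1\<^sub>m _"])
  have G2: "Q2 \<in> G_scaled L d" unfolding G_scaled_def Q2_def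
  proof (intro CollectI conjI allI impI)
    fix l assume l: "1 \<le> l \<and> l \<le> L - 1"
    then have c: "0 < l \<and> l < L" using L by auto
    show "\<exists>Pa Da. perm_matrix (d l) Pa \<and> pos_diag_matrix (d l) Da \<and>
             (if 0 < l \<and> l < L then Pt l * S l else 1\<^sub>m (d l)) = Pa * Da"
      using PD c Spd[of l] by auto
  qed auto
  have pos1: "\<forall>l\<le>L. \<forall>i<d l. \<delta>1 l i > 0" unfolding \<delta>1_def using Dpos by auto
  have n0: "(rnn_norm L \<theta>)\<^sup>2 = E L d \<theta> (\<lambda>_ _. 1)" by (rule norm_base[OF L wf])
  have nQ0: "(rnn_norm L (rnn_act L d Q0 \<theta>))\<^sup>2 = E L d \<theta> (\<lambda>_ _. 1)" by (rule norm_act[OF L wf g0])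
  have nQ1: "(rnn_norm L (rnn_act L d Q1 \<theta>))\<^sup>2 = E L d \<theta> \<delta>1" by (rule norm_act[OF L wf g1])
  have nQ2: "(rnn_norm L (rnn_act L d Q2 \<theta>))\<^sup>2 = E L d \<theta> (\<lambda>l i. sqrt (\<delta>1 l i))" by (rule norm_act[OF L wf g2])
  have m1: "rnn_norm L \<theta> \<le> rnn_norm L (rnn_act L d Q2 \<theta>)"
    using assms(5) G2 unfolding X_min_def by blast
  have m2: "rnn_norm L (rnn_act L d Q1 \<theta>) \<le> rnn_norm L (rnn_act L d Q0 \<theta>)"
    using assms(6) G0 unfolding X_min_def Q1_def by blast
  have nn: "rnn_norm L t \<ge> 0" for t unfolding rnn_norm_def
    by (intro real_sqrt_ge_zero add_nonneg_nonneg sum_nonneg frob2_nonneg vnorm2_nonneg)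
  have i1: "E L d \<theta> (\<lambda>_ _. 1) \<le> E L d \<theta> (\<lambda>l i. sqrt (\<delta>1 l i))"
    using power_mono[OF m1 nn, of 2] n0 nQ2 by simp
  have i2: "E L d \<theta> \<delta>1 \<le> E L d \<theta> (\<lambda>_ _. 1)"
    using power_mono[OF m2 nn, of 2] nQ0 nQ1 by simp
  define T where "T = (\<lambda>l i. (\<delta>1 l i - 1)\<^sup>2 * (bias \<theta> (l-1) $ i)\<^sup>2)"
  define B where "B = (\<Sum>l\<in>{1..<L}. \<Sum>i<d l. T l i)"
  have "2 * E L d \<theta> (\<lambda>l i. sqrt (\<delta>1 l i)) + B \<le> E L d \<theta> (\<lambda>_ _. 1) + E L d \<theta> \<delta>1"
    unfolding B_def T_def by (rule E_ineq[OF L pos1])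
  then have Ble: "B \<le> 0" using i1 i2 by linarith
  have Tnn: "0 \<le> T l i" for l i unfolding T_def by simp
  have Bnn: "\<forall>l\<in>{1..<L}. 0 \<le> (\<Sum>i<d l. T l i)"
    using Tnn by (auto intro!: sum_nonneg)
  have B0: "B = 0" using Ble Bnn unfolding B_def by (meson order_antisym sum_nonneg)
  have s0: "\<forall>l\<in>{1..<L}. (\<Sum>i<d l. T l i) = 0"
    using sum_nonneg_eq_0_iff[OF finite_atLeastLessThan[of 1 L], where f = "\<lambda>l. \<Sum>i<d l. T l i"] Bnn B0
    unfolding B_def by blast
  have z: "T l i = 0" if l: "l \<in> {1..<L}" and i: "i < d l" for l i
    using sum_nonneg_eq_0_iff[OF finite_lessThan[of "d l"], where f = "\<lambda>i. T l i"] s0 l i Tnn by auto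
  show ?thesis
  proof (intro allI impI)
    fix l assume l: "0 < l \<and> l < L"
    have lm: "l \<in> {1..<L}" using l by auto
    have diag1: "D l $$ (i,i) = 1" if i: "i < d l" for i
    proof -
      have "bias \<theta> (l-1) $ i \<noteq> 0" using bnz l i by (metis Suc_pred' less_imp_diff_less)
      then show ?thesis using z[OF lm i] l unfolding \<delta>1_def T_def by simp
    qed
    have Dc: "D l \<in> carrier_mat (d l) (d l)" and Dd: "diagonal_mat (D l)"
      using PD l unfolding pos_diag_matrix_def by auto
    show "D l = 1\<^sub>m (d l)"
      by (rule eq_matI) (use Dc Dd diag1 in \<open>auto simp: diagonal_mat_def\<close>)
  qed
qed

end
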